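(* Let $I\subseteq\{1,\dots,N\}$ with cardinality $k$, $2\le k\le N$, and let $v$ be the center of the face $\Delta_I$, i.e. $v_i=1/k$ for $i\in I$ and $v_i=0$ otherwise. Then $v$ is a linearly stable equilibrium if $\alpha<(k-1)/(k-2)$, and a linearly unstable equilibrium if $\alpha>(k-1)/(k-2)$ (with the convention $(k-1)/(k-2)=+\infty$ when $k=2$).
   Context: Let $N\ge3$, $\alpha>1$, and $A_{i,j}=1-\delta_{i,j}$ for $i,j\le N$. Let $\Delta=\{v\in\mathbb R_+^N:\sum_iv_i=1,\ v_i\le3/4\ \forall i\}$ and $\Delta_I=\{v\in\Delta:v_i=0\ \forall i\notin I\}$. For $v$ with nonnegative coordinates let $v^\alpha=(v_i^\alpha)_i$, $H(v)=\sum_{i\neq j}v_i^\alpha v_j^\alpha$, $\pi_i(v)=v_i^\alpha(Av^\alpha)_i/H(v)$, and on $\Delta$ let $F(v)=-v+\pi(v)$. An equilibrium is $v\in\Delta$ with $F(v)=0$. With $DF(v)$ the differential at $v$ of $v\mapsto-v+\pi(v)$ acting on $\{x:\sum_ix_i=0\}$, an equilibrium is linearly stable if all eigenvalues of $DF(v)$ have negative real parts and linearly unstable if some eigenvalue has positive real part. *)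

theory Defs
  imports "HOL-Analysis.Analysis"
begin

text \<open>Coordinates are indexed by a finite type 'n with CARD('n) = N.
  v^alpha = (v_i^alpha)_i; A = all-ones matrix minus identity, so
  (A v^alpha)_i = sum over j different from i of v_j^alpha.\<close>

definition vpow :: "real \<Rightarrow> real^'n \<Rightarrow> real^'n" where
  "vpow \<alpha> v = (\<chi> i. (v$i) powr \<alpha>)"

definition Amat :: "real^'n^'n" where
  "Amat = (\<chi> i j. if i = j then 0 else 1)"

definition Hfun :: "real \<Rightarrow> real^'n \<Rightarrow> real" where
  "Hfun \<alpha> v = (\<Sum>i\<in>UNIV. \<Sum>j\<in>UNIV - {i}. (vpow \<alpha> v)$i * (vpow \<alpha> v)$j)"

definition pifun :: "real \<Rightarrow> real^'n \<Rightarrow> real^'n" where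
  "pifun \<alpha> v = (\<chi> i. (vpow \<alpha> v)$i * (Amat *v vpow \<alpha> v)$i / Hfun \<alpha> v)"

definition Ffun :: "real \<Rightarrow> real^'n \<Rightarrow> real^'n" where
  "Ffun \<alpha> v = - v + pifun \<alpha> v"

definition Simplex :: "(real^'n) set" where
  "Simplex = {v. (\<forall>i. 0 \<le> v$i \<and> v$i \<le> 3/4) \<and> (\<Sum>i\<in>UNIV. v$i) = 1}"

definition equilibrium :: "real \<Rightarrow> real^'n \<Rightarrow> bool" where
  "equilibrium \<alpha> v \<longleftrightarrow> v \<in> Simplex \<and> Ffun \<alpha> v = 0"

definition Tspace :: "(real^'n) set" where
  "Tspace = {x. (\<Sum>i\<in>UNIV. x$i) = 0}"

text \<open>Differential at v of the map -v + pi(v), which is defined on vectors with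
  nonnegative coordinates (so the derivative is taken within that orthant).\<close>
definition DF :: "real \<Rightarrow> real^'n \<Rightarrow> real^'n \<Rightarrow> real^'n" where
  "DF \<alpha> v = frechet_derivative (\<lambda>x. - x + pifun \<alpha> x) (at v within {x. \<forall>i. 0 \<le> x$i})"

text \<open>Complex eigenvalues of a real linear map L acting on a real subspace W:
  eigenvalues of its complexification, i.e. there is a nonzero z = x + i y with
  x, y in W and L z = lambda z.\<close>
definition eigenvalue_on :: "(real^'n \<Rightarrow> real^'n) \<Rightarrow> (real^'n) set \<Rightarrow> complex \<Rightarrow> bool" where
  "eigenvalue_on L W c \<longleftrightarrow> (\<exists>x y. x \<in> W \<and> y \<in> W \<and> (x \<noteq> 0 \<or> y \<noteq> 0) \<and>
       L x = Re c *\<^sub>R x - Im c *\<^sub>R y \<and> L y = Im c *\<^sub>R x + Re c *\<^sub>R y)"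

definition lin_stable_eq :: "real \<Rightarrow> real^'n \<Rightarrow> bool" where
  "lin_stable_eq \<alpha> v \<longleftrightarrow> equilibrium \<alpha> v \<and>
     (\<forall>c. eigenvalue_on (DF \<alpha> v) Tspace c \<longrightarrow> Re c < 0)"

definition lin_unstable_eq :: "real \<Rightarrow> real^'n \<Rightarrow> bool" where
  "lin_unstable_eq \<alpha> v \<longleftrightarrow> equilibrium \<alpha> v \<and>
     (\<exists>c. eigenvalue_on (DF \<alpha> v) Tspace c \<and> Re c > 0)"

definition face_center :: "'n set \<Rightarrow> real^'n" where
  "face_center I = (\<chi> i. if i \<in> I then 1 / real (card I) else 0)"

end

theory Submission
  imports Defs
begin

lemma powr_deriv_nonneg:
  fixes a t :: real
  assumes a: "a > 1" and t: "t \<ge> 0"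
  shows "((\<lambda>s. s powr a) has_real_derivative a * t powr (a-1)) (at t within {0..})"
proof (cases "t > 0")
  case True
  then show ?thesis using has_real_derivative_powr has_field_derivative_at_within by blast
next
  case False
  then have t0: "t = 0" using t by simp
  have lim: "((\<lambda>y::real. y powr (a-1)) \<longlongrightarrow> 0) (at 0 within {0..})"
    apply (rule tendsto_zero_powrI[where b="a-1"])
    using a by (auto intro!: tendsto_ident_at simp: eventually_at_filter)
  have "((\<lambda>y::real. (y powr a - 0 powr a) / (y - 0)) \<longlongrightarrow> 0) (at 0 within {0..})"
  proof (rule Lim_transform_within[OF lim zero_less_one])
    fix y :: real assume "y \<in> {0..}" "0 < dist y 0" "dist y 0 < 1"
    then have "y > 0" by auto
    then show "y powr (a-1) = (y powr a - 0 powr a) / (y - 0)"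
      by (simp add: powr_diff)
  qed
  then show ?thesis using t0 by (simp add: has_field_derivative_iff)
qed

lemma vec_has_derivative:
  fixes f :: "'a::real_normed_vector \<Rightarrow> real^'n"
  assumes "\<And>i. ((\<lambda>x. f x $ i) has_derivative (\<lambda>h. f' h $ i)) (at a within S)"
  shows "(f has_derivative f') (at a within S)"
proof -
  have "\<forall>b\<in>Basis. ((\<lambda>x. f x \<bullet> b) has_derivative (\<lambda>x. f' x \<bullet> b)) (at a within S)"
  proof
  fix b :: "real^'n" assume "b \<in> Basis"
  then obtain i u where u: "u \<in> (Basis::real set)" and b: "b = axis i u" unfolding Basis_vec_def by blast
  have u1: "u = 1" using u by simp
  have e: "\<And>y::real^'n. y \<bullet> b = y $ i" unfolding b u1 by (simp only: inner_axis real_inner_1_right)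
  show "((\<lambda>x. f x \<bullet> b) has_derivative (\<lambda>x. f' x \<bullet> b)) (at a within S)"
    unfolding e by (rule assms)
  qed
  then show ?thesis using has_derivative_componentwise_within by blast
qed

lemma coord_powr_deriv:
  fixes v :: "real^'n" and a :: real
  assumes a: "a > 1" and v: "v \<in> {x. \<forall>i. 0 \<le> x$i}"
  shows "((\<lambda>x. x$j powr a) has_derivative (\<lambda>h. a * (v$j) powr (a-1) * h$j)) (at v within {x. \<forall>i. 0 \<le> x$i})"
proof -
  have "((\<lambda>x. (\<lambda>s. s powr a) ((\<lambda>x. x$j) x)) has_derivative
       (\<lambda>h. (\<lambda>t u. (a * t powr (a-1)) * u) ((\<lambda>x. x$j) v) ((\<lambda>h. h$j) h))) (at v within {x. \<forall>i. 0 \<le> x$i})"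
    apply (rule has_derivative_in_compose2[of "{0..}" "\<lambda>s. s powr a" "\<lambda>t u. (a * t powr (a-1)) * u"])
    subgoal using powr_deriv_nonneg[OF a] by (simp add: has_field_derivative_def)
    subgoal by auto
    subgoal using v .
    subgoal by (rule bounded_linear.has_derivative[OF bounded_linear_vec_nth has_derivative_ident])
    done
  then show ?thesis by simp
qed


definition Dmap :: "real \<Rightarrow> 'n::finite set \<Rightarrow> real^'n \<Rightarrow> real^'n" where
  "Dmap a I h = (\<chi> i. - h$i + (if i \<in> I then a * ((real (card I) - 2) / (real (card I) - 1) * h$i
      + (1 / (real (card I) - 1) - 2 / real (card I)) * (\<Sum>m\<in>I. h$m)) else 0))"

lemma sum_if_I: "(\<Sum>j\<in>(UNIV::'n::finite set). if j \<in> I then f j else 0) = sum f I"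
  by (simp add: sum.If_cases)

lemma sum_minus_one: "(\<Sum>j\<in>(UNIV::'n::finite set). (if i = j then 0 else 1) * (g j::real)) = sum g UNIV - g i"
proof -
  have "(\<Sum>j\<in>(UNIV::'n set). (if i = j then 0 else 1) * g j) = (\<Sum>j\<in>UNIV. g j - (if j = i then g i else 0))"
    by (rule sum.cong) auto
  also have "\<dots> = sum g UNIV - g i" by (simp add: sum_subtractf)
  finally show ?thesis .
qed

lemma sum_minus_set: "(\<Sum>j\<in>(UNIV::'n::finite set) - {i}. (g j::real)) = sum g UNIV - g i"
  by (simp add: sum_diff1)

lemma fc_val: "face_center I $ j = (if j \<in> I then 1 / real (card I) else 0)"
  by (simp add: face_center_def)

lemma fc_pow: "face_center I $ j powr p = (if j \<in> I then (1 / real (card I)) powr p else 0)"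
  by (simp add: face_center_def)

lemma comp_eq: "(- x + pifun a x) $ i = - x$i + (x$i powr a * (\<Sum>j\<in>UNIV. (if i = j then 0 else 1) * x$j powr a))
   / (\<Sum>i\<in>UNIV. \<Sum>j\<in>UNIV - {i}. x$i powr a * x$j powr a)"
  by (simp add: pifun_def vpow_def Amat_def matrix_vector_mult_def Hfun_def)

lemma deriv_comp:
  fixes I :: "'n::finite set" and a :: real
  assumes a: "a > 1" and k2: "card I \<ge> 2"
  shows "((\<lambda>x. (- x + pifun a x) $ i) has_derivative (\<lambda>h. Dmap a I h $ i))
           (at (face_center I) within {x. \<forall>i. 0 \<le> x$i})"
proof -
  define W :: "(real^'n) set" where "W = {x. \<forall>i. 0 \<le> x$i}"
  define v where "v = face_center I"
  define k where "k = real (card I)"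
  define c where "c = (1 / k) powr a"
  define e where "e = (1 / k) powr (a - 1)"
  define s where "s h = (\<Sum>m\<in>I. h$m)" for h :: "real^'n"
  have k1: "k \<ge> 2" using k2 unfolding k_def by simp
  have cpos: "c > 0" using k1 unfolding c_def by simp
  have ce: "e = k * c"
  proof -
    have "c = (1/k) powr (a - 1 + 1)" unfolding c_def by simp
    also have "\<dots> = e * (1/k)" unfolding e_def using k1 by (subst powr_add) simp
    finally have "c = e * (1/k)" .
    then show ?thesis using k1 by (simp add: field_simps)
  qed
  have vW: "v \<in> W" unfolding W_def v_def by (simp add: face_center_def)
  define wd where "wd j h = a * v$j powr (a-1) * h$j" for j and h :: "real^'n"
  have dw: "((\<lambda>x. x$j powr a) has_derivative wd j) (at v within W)" for j
    using coord_powr_deriv[OF a vW[unfolded W_def], of j] unfolding W_def wd_def by simp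
  have pw: "v$j powr a = (if j \<in> I then c else 0)" for j
    unfolding v_def c_def k_def by (simp add: fc_pow)
  have wdv: "wd j h = (if j \<in> I then a * e * h$j else 0)" for j h
    unfolding wd_def v_def e_def k_def by (simp add: fc_pow)
  have dQ: "((\<lambda>x. \<Sum>j\<in>UNIV. (if i = j then 0 else 1) * x$j powr a) has_derivative
             (\<lambda>h. \<Sum>j\<in>UNIV. (if i = j then 0 else 1) * wd j h)) (at v within W)"
    by (intro has_derivative_sum has_derivative_mult_right dw)
  have dN: "((\<lambda>x. x$i powr a * (\<Sum>j\<in>UNIV. (if i = j then 0 else 1) * x$j powr a)) has_derivative
             (\<lambda>h. v$i powr a * (\<Sum>j\<in>UNIV. (if i = j then 0 else 1) * wd j h)
                 + wd i h * (\<Sum>j\<in>UNIV. (if i = j then 0 else 1) * v$j powr a))) (at v within W)"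
    by (rule has_derivative_mult[OF dw dQ])
  have dH: "((\<lambda>x. \<Sum>i\<in>UNIV. \<Sum>j\<in>UNIV - {i}. x$i powr a * x$j powr a) has_derivative
             (\<lambda>h. \<Sum>i\<in>UNIV. \<Sum>j\<in>UNIV - {i}. v$i powr a * wd j h + wd i h * v$j powr a)) (at v within W)"
    by (intro has_derivative_sum has_derivative_mult dw)
  have Qv: "(\<Sum>j\<in>UNIV. (if i = j then 0 else 1) * v$j powr a) = k * c - (if i \<in> I then c else 0)"
    unfolding sum_minus_one pw sum_if_I k_def by simp
  have Qd: "(\<Sum>j\<in>UNIV. (if i = j then 0 else 1) * wd j h) = a * e * s h - (if i \<in> I then a * e * h$i else 0)" for h
    unfolding sum_minus_one wdv sum_if_I s_def by (simp add: sum_distrib_left)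
  have Hv: "(\<Sum>i\<in>UNIV. \<Sum>j\<in>UNIV - {i}. v$i powr a * v$j powr a) = k * (k - 1) * c * c"
  proof -
    have "(\<Sum>i\<in>UNIV. \<Sum>j\<in>UNIV - {i}. v$i powr a * v$j powr a)
        = (\<Sum>i\<in>UNIV. if i \<in> I then c * (k * c - c) else 0)"
    proof (rule sum.cong)
      fix i :: 'n
      have "(\<Sum>j\<in>UNIV - {i}. v$i powr a * v$j powr a) = v$i powr a * ((\<Sum>j\<in>UNIV. v$j powr a) - v$i powr a)"
        by (simp add: sum_distrib_left[symmetric] sum_minus_set)
      also have "\<dots> = (if i \<in> I then c * (k * c - c) else 0)"
        unfolding pw sum_if_I k_def by simp
      finally show "(\<Sum>j\<in>UNIV - {i}. v$i powr a * v$j powr a) = (if i \<in> I then c * (k * c - c) else 0)" .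
    qed simp
    also have "\<dots> = k * (k - 1) * c * c" unfolding sum_if_I k_def by (simp add: algebra_simps)
    finally show ?thesis .
  qed
  have Hd: "(\<Sum>i\<in>UNIV. \<Sum>j\<in>UNIV - {i}. v$i powr a * wd j h + wd i h * v$j powr a) = 2 * (k - 1) * c * a * e * s h" for h
  proof -
    have "(\<Sum>i\<in>UNIV. \<Sum>j\<in>UNIV - {i}. v$i powr a * wd j h + wd i h * v$j powr a)
        = (\<Sum>i\<in>UNIV. if i \<in> I then c * (a * e * s h - a * e * h$i) + a * e * h$i * (k * c - c) else 0)"
    proof (rule sum.cong)
      fix i :: 'n
      have "(\<Sum>j\<in>UNIV - {i}. v$i powr a * wd j h + wd i h * v$j powr a)
          = v$i powr a * ((\<Sum>j\<in>UNIV. wd j h) - wd i h) + wd i h * ((\<Sum>j\<in>UNIV. v$j powr a) - v$i powr a)"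
        by (simp add: sum.distrib sum_distrib_left[symmetric] sum_minus_set)
      also have "\<dots> = (if i \<in> I then c * (a * e * s h - a * e * h$i) + a * e * h$i * (k * c - c) else 0)"
        unfolding pw wdv sum_if_I k_def s_def by (simp add: sum_distrib_left)
      finally show "(\<Sum>j\<in>UNIV - {i}. v$i powr a * wd j h + wd i h * v$j powr a) = (if i \<in> I then c * (a * e * s h - a * e * h$i) + a * e * h$i * (k * c - c) else 0)" .
    qed simp
    also have "\<dots> = c * (a * e * (k * s h) - a * e * s h) + a * e * s h * (k * c - c)"
      unfolding sum_if_I by (simp add: sum_subtractf sum.distrib sum_distrib_left[symmetric] sum_distrib_right[symmetric] s_def k_def)
    also have "\<dots> = 2 * (k - 1) * c * a * e * s h" by (simp add: algebra_simps)
    finally show ?thesis .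
  qed
  have Hne: "(\<Sum>i\<in>UNIV. \<Sum>j\<in>UNIV - {i}. v$i powr a * v$j powr a) \<noteq> 0"
    unfolding Hv using k1 cpos by simp
  have dF: "((\<lambda>x. - x$i + (x$i powr a * (\<Sum>j\<in>UNIV. (if i = j then 0 else 1) * x$j powr a))
   / (\<Sum>i\<in>UNIV. \<Sum>j\<in>UNIV - {i}. x$i powr a * x$j powr a)) has_derivative (\<lambda>h. Dmap a I h $ i)) (at v within W)"
    apply (rule has_derivative_eq_rhs)
     apply (rule has_derivative_add[OF has_derivative_minus[OF bounded_linear.has_derivative[OF bounded_linear_vec_nth has_derivative_ident]] has_derivative_divide'[OF dN dH Hne]])
    apply (rule ext)
    unfolding Qv Qd Hv Hd
    apply (cases "i \<in> I")
     apply (simp add: Dmap_def wdv s_def[symmetric] k_def[symmetric])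
    subgoal for h
    proof -
      assume iI: "i \<in> I"
      have kk: "k \<noteq> 0" "k - 1 \<noteq> 0" "c \<noteq> 0" using k1 cpos by auto
      have D: "k * (k - 1) * c * c * (k * (k - 1) * c * c) \<noteq> 0" and D2: "k * (k - 1) \<noteq> 0" using kk by simp_all
      have R: "a * ((k - 2) * h $ i / (k - 1) + (1 / (k - 1) - 2 / k) * s h)
             = a * (k * (k - 2) * h $ i + (k - 2 * (k - 1)) * s h) / (k * (k - 1))"
        using kk by (simp add: divide_simps)
      show ?thesis unfolding pw ce R using iI
        apply (simp only: if_True)
        apply (subst frac_eq_eq[OF D D2])
        apply algebra
        done
    qed
    by (simp add: Dmap_def wdv pw)
  show ?thesis unfolding comp_eq using dF unfolding W_def v_def .
qed

lemma DF_eq: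
  fixes I :: "'n::finite set" and a :: real
  assumes a: "a > 1" and k2: "card I \<ge> 2"
  shows "DF a (face_center I) = Dmap a I"
proof -
  define W :: "(real^'n) set" where "W = {x. \<forall>i. 0 \<le> x$i}"
  have d: "((\<lambda>x. - x + pifun a x) has_derivative Dmap a I) (at (face_center I) within W)"
    unfolding W_def by (rule vec_has_derivative) (rule deriv_comp[OF a k2])
  then have dd: "(\<lambda>x. - x + pifun a x) differentiable (at (face_center I) within W)"
    unfolding differentiable_def by blast
  have d2: "((\<lambda>x. - x + pifun a x) has_derivative DF a (face_center I)) (at (face_center I) within W)"
    using dd unfolding DF_def W_def frechet_derivative_works .
  show ?thesis
  proof (rule frechet_derivative_unique_within[OF d2 d])
    fix b :: "real^'n" and e :: real
    assume b: "b \<in> Basis" and e: "e > 0"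
    then obtain j u where u: "u \<in> (Basis::real set)" and bj: "b = axis j u" unfolding Basis_vec_def by blast
    have u1: "u = 1" using u by simp
    show "\<exists>d. 0 < \<bar>d\<bar> \<and> \<bar>d\<bar> < e \<and> face_center I + d *\<^sub>R b \<in> W"
    proof (intro exI conjI)
      show "0 < \<bar>e/2\<bar>" "\<bar>e/2\<bar> < e" using e by auto
      show "face_center I + (e/2) *\<^sub>R b \<in> W"
        unfolding W_def bj u1 using e by (simp add: face_center_def axis_def)
    qed
  qed
qed

lemma zero2:
  fixes q b u w :: real
  assumes "q \<noteq> 0" "q * u - b * w = 0" "b * u + q * w = 0"
  shows "u = 0 \<and> w = 0"
proof -
  have "(q*q + b*b) * u = q * (q * u - b * w) + b * (b * u + q * w)" by (simp add: algebra_simps)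
  then have "(q*q + b*b) * u = 0" using assms by simp
  moreover have "q*q + b*b > 0"
  proof -
    have "q*q > 0" using assms(1) not_real_square_gt_zero by blast
    moreover have "b*b \<ge> 0" by simp
    ultimately show ?thesis by linarith
  qed
  ultimately have u0: "u = 0" by (metis less_irrefl mult_eq_0_iff)
  then show ?thesis using assms by simp
qed

lemma Dmap_nth: "Dmap a I h $ j = - h$j + (if j \<in> I then a * ((real (card I) - 2) / (real (card I) - 1) * h$j
      + (1 / (real (card I) - 1) - 2 / real (card I)) * (\<Sum>m\<in>I. h$m)) else 0)"
  by (simp add: Dmap_def)

lemma stable_part:
  fixes I :: "'n::finite set" and a :: real
  assumes a: "a > 1" and k2: "card I \<ge> 2"
    and cond: "card I = 2 \<or> a < (real (card I) - 1) / (real (card I) - 2)"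
    and ev: "eigenvalue_on (Dmap a I) Tspace c"
  shows "Re c < 0"
proof (rule ccontr)
  assume "\<not> Re c < 0"
  then have p0: "Re c \<ge> 0" by simp
  define k where "k = real (card I)"
  define g where "g = a * (k - 2) / (k - 1)"
  have k1: "k \<ge> 2" using k2 unfolding k_def by simp
  have g1: "g < 1"
  proof (cases "card I = 2")
    case True then show ?thesis unfolding g_def k_def by simp
  next
    case False
    then have k3: "k > 2" using k2 unfolding k_def by simp
    with cond False have "a < (k - 1) / (k - 2)" unfolding k_def by simp
    then have "a * (k - 2) < k - 1" using k3 by (simp add: pos_less_divide_eq)
    then show ?thesis unfolding g_def using k3 by (simp add: pos_divide_less_eq)
  qed
  from ev obtain x y where xT: "x \<in> Tspace" and yT: "y \<in> Tspace" and nz: "x \<noteq> 0 \<or> y \<noteq> 0"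
    and ex: "Dmap a I x = Re c *\<^sub>R x - Im c *\<^sub>R y" and ey: "Dmap a I y = Im c *\<^sub>R x + Re c *\<^sub>R y"
    unfolding eigenvalue_on_def by blast
  have exj: "Dmap a I x $ j = Re c * x$j - Im c * y$j" for j using ex by (simp add: vec_eq_iff)
  have eyj: "Dmap a I y $ j = Im c * x$j + Re c * y$j" for j using ey by (simp add: vec_eq_iff)
  have out: "x$j = 0 \<and> y$j = 0" if jI: "j \<notin> I" for j
  proof (rule zero2[where q="Re c + 1" and b="Im c"])
    show "Re c + 1 \<noteq> 0" using p0 by simp
    show "(Re c + 1) * x$j - Im c * y$j = 0" using exj[of j] jI by (simp add: Dmap_nth algebra_simps)
    show "Im c * x$j + (Re c + 1) * y$j = 0" using eyj[of j] jI by (simp add: Dmap_nth algebra_simps)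
  qed
  have sumI: "(\<Sum>m\<in>I. z$m) = 0" if zT: "z \<in> Tspace" and zo: "\<And>j. j \<notin> I \<Longrightarrow> z$j = 0" for z :: "real^'n"
  proof -
    have "(\<Sum>m\<in>UNIV. z$m) = (\<Sum>m\<in>I. z$m)"
      by (rule sum.mono_neutral_cong_right) (auto simp: zo)
    then show ?thesis using zT unfolding Tspace_def by simp
  qed
  have sx: "(\<Sum>m\<in>I. x$m) = 0" using sumI[OF xT] out by blast
  have sy: "(\<Sum>m\<in>I. y$m) = 0" using sumI[OF yT] out by blast
  have inn: "x$j = 0 \<and> y$j = 0" if jI: "j \<in> I" for j
  proof (rule zero2[where q="g - 1 - Re c" and b="- Im c"])
    show "g - 1 - Re c \<noteq> 0" using p0 g1 by simp
    show "(g - 1 - Re c) * x$j - (- Im c) * y$j = 0" using exj[of j] jI sx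
      by (simp add: Dmap_nth g_def k_def algebra_simps)
    show "(- Im c) * x$j + (g - 1 - Re c) * y$j = 0" using eyj[of j] jI sy
      by (simp add: Dmap_nth g_def k_def algebra_simps)
  qed
  have "x = 0" "y = 0" using out inn by (auto simp: vec_eq_iff)
  with nz show False by simp
qed

lemma unstable_part:
  fixes I :: "'n::finite set" and a :: real
  assumes a: "a > 1" and k3: "card I > 2"
    and cond: "a > (real (card I) - 1) / (real (card I) - 2)"
  shows "\<exists>c. eigenvalue_on (Dmap a I) Tspace c \<and> Re c > 0"
proof -
  define k where "k = real (card I)"
  define g where "g = a * (k - 2) / (k - 1)"
  have k2: "k > 2" using k3 unfolding k_def by simp
  have g1: "g > 1"
  proof -
    have "a * (k - 2) > k - 1" using cond k2 unfolding k_def by (simp add: pos_divide_less_eq)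
    then show ?thesis unfolding g_def using k2 by (simp add: pos_less_divide_eq)
  qed
  have "finite I" by simp
  have "\<exists>p1 p2. p1 \<in> I \<and> p2 \<in> I \<and> p1 \<noteq> p2"
  proof -
    have "1 < card I" using k3 by simp
    then show ?thesis using card_le_Suc0_iff_eq[of I] by (metis \<open>finite I\<close> not_less One_nat_def)
  qed
  then obtain p1 p2 where p: "p1 \<in> I" "p2 \<in> I" "p1 \<noteq> p2" by blast
  define x :: "real^'n" where "x = axis p1 1 - axis p2 1"
  have xj: "x$j = (if j = p1 then 1 else 0) - (if j = p2 then 1 else 0)" for j
    unfolding x_def by (simp add: axis_def)
  have sx: "(\<Sum>m\<in>I. x$m) = 0" unfolding xj using p by (simp add: sum_subtractf)
  have "(\<Sum>m\<in>UNIV. x$m) = 0" unfolding xj by (simp add: sum_subtractf)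
  then have xT: "x \<in> Tspace" unfolding Tspace_def by simp
  have xnz: "x \<noteq> 0"
  proof
    assume "x = 0"
    then have "x$p1 = 0" by simp
    then show False using xj[of p1] p by simp
  qed
  have Dx: "Dmap a I x = (g - 1) *\<^sub>R x"
  proof (rule iffD2[OF vec_eq_iff], rule allI)
    fix j
    show "Dmap a I x $ j = ((g - 1) *\<^sub>R x) $ j"
    proof (cases "j \<in> I")
      case True then show ?thesis using sx by (simp add: Dmap_nth g_def k_def algebra_simps)
    next
      case False
      then have "x$j = 0" unfolding xj using p by auto
      then show ?thesis using False by (simp add: Dmap_nth)
    qed
  qed
  have D0: "Dmap a I 0 = 0" by (simp add: Dmap_def vec_eq_iff)
  show ?thesis
  proof (intro exI conjI)
    show "eigenvalue_on (Dmap a I) Tspace (Complex (g - 1) 0)"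
      unfolding eigenvalue_on_def
      apply (rule exI[of _ x], rule exI[of _ 0])
      using xT xnz Dx D0 by (simp add: Tspace_def)
    show "Re (Complex (g - 1) 0) > 0" using g1 by simp
  qed
qed

lemma equil:
  fixes I :: "'n::finite set" and a :: real
  assumes a: "a > 1" and k2: "card I \<ge> 2"
  shows "equilibrium a (face_center I)"
proof -
  define v where "v = face_center I"
  define k where "k = real (card I)"
  define c where "c = (1 / k) powr a"
  have k1: "k \<ge> 2" using k2 unfolding k_def by simp
  have cpos: "c > 0" using k1 unfolding c_def by simp
  have pw: "v$j powr a = (if j \<in> I then c else 0)" for j
    unfolding v_def c_def k_def by (simp add: fc_pow)
  have Qv: "(\<Sum>j\<in>UNIV. (if i = j then 0 else 1) * v$j powr a) = k * c - (if i \<in> I then c else 0)" for i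
    unfolding sum_minus_one pw sum_if_I k_def by simp
  have Hv: "(\<Sum>i\<in>UNIV. \<Sum>j\<in>UNIV - {i}. v$i powr a * v$j powr a) = k * (k - 1) * c * c"
  proof -
    have "(\<Sum>i\<in>UNIV. \<Sum>j\<in>UNIV - {i}. v$i powr a * v$j powr a)
        = (\<Sum>i\<in>UNIV. if i \<in> I then c * (k * c - c) else 0)"
    proof (rule sum.cong)
      fix i :: 'n
      have "(\<Sum>j\<in>UNIV - {i}. v$i powr a * v$j powr a) = v$i powr a * ((\<Sum>j\<in>UNIV. v$j powr a) - v$i powr a)"
        by (simp add: sum_distrib_left[symmetric] sum_minus_set)
      also have "\<dots> = (if i \<in> I then c * (k * c - c) else 0)"
        unfolding pw sum_if_I k_def by simp
      finally show "(\<Sum>j\<in>UNIV - {i}. v$i powr a * v$j powr a) = (if i \<in> I then c * (k * c - c) else 0)" .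
    qed simp
    also have "\<dots> = k * (k - 1) * c * c" unfolding sum_if_I k_def by (simp add: algebra_simps)
    finally show ?thesis .
  qed
  have vv: "v$j = (if j \<in> I then 1 / k else 0)" for j unfolding v_def k_def by (simp add: fc_val)
  have F0: "Ffun a v = 0"
  proof (rule iffD2[OF vec_eq_iff], rule allI)
    fix i
    have kk: "k \<noteq> 0" "k - 1 \<noteq> 0" "c \<noteq> 0" using k1 cpos by auto
    show "Ffun a v $ i = 0 $ i"
      unfolding Ffun_def comp_eq unfolding Qv Hv unfolding pw
      using kk by (cases "i \<in> I") (simp_all add: vv field_simps)
  qed
  have S: "v \<in> Simplex"
  proof -
    have "\<forall>i. 0 \<le> v$i \<and> v$i \<le> 3/4"
    proof
      fix i show "0 \<le> v$i \<and> v$i \<le> 3/4" unfolding vv using k1 by (auto simp: field_simps)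
    qed
    moreover have "(\<Sum>i\<in>UNIV. v$i) = 1" unfolding vv sum_if_I using k1 k2 by (auto simp: k_def)
    ultimately show ?thesis unfolding Simplex_def by simp
  qed
  show ?thesis using S F0 unfolding equilibrium_def v_def by simp
qed

theorem lemma4p2:
  fixes \<alpha> :: real and I :: "('n::finite) set" and k :: nat
  assumes "CARD('n) \<ge> 3" and "\<alpha> > 1"
    and "card I = k" and "2 \<le> k"
  shows "((k = 2 \<or> \<alpha> < (real k - 1) / (real k - 2)) \<longrightarrow> lin_stable_eq \<alpha> (face_center I))
    \<and> ((k > 2 \<and> \<alpha> > (real k - 1) / (real k - 2)) \<longrightarrow> lin_unstable_eq \<alpha> (face_center I))"
proof -
  have a: "\<alpha> > 1" and k2: "card I \<ge> 2" using assms by auto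
  have DF: "DF \<alpha> (face_center I) = Dmap \<alpha> I" by (rule DF_eq[OF a k2])
  have E: "equilibrium \<alpha> (face_center I)" by (rule equil[OF a k2])
  show ?thesis
  proof (intro conjI impI)
    assume "k = 2 \<or> \<alpha> < (real k - 1) / (real k - 2)"
    then have cond: "card I = 2 \<or> \<alpha> < (real (card I) - 1) / (real (card I) - 2)" using assms by simp
    show "lin_stable_eq \<alpha> (face_center I)"
      unfolding lin_stable_eq_def DF using E stable_part[OF a k2 cond] by blast
  next
    assume "k > 2 \<and> \<alpha> > (real k - 1) / (real k - 2)"
    then have k3: "card I > 2" and cond: "\<alpha> > (real (card I) - 1) / (real (card I) - 2)" using assms by simp_all
    show "lin_unstable_eq \<alpha> (face_center I)"
      unfolding lin_unstable_eq_def DF using E unstable_part[OF a k3 cond] by blast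
  qed
qed

end
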